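(* Let $m\ge6$ be even, $t=m/2$, and $s$ an integer with $2\le s\le 2^{t-1}$. Let $E_1,\dots,E_\alpha$ be a partial spread in $\mathbb{F}_2^m$ and $A,B\subseteq\{1,\dots,\alpha\}$ with $|A|=|B|=s$ and $|A\cap B|=1$. Let $f=\sum_{i\in A}f_i$, $g=\sum_{i\in B}f_i$, and $F=\{f,g,f+g\}$. Then for every nonzero $\mathbf{h}\in\mathbb{F}_2^m$ and all $f_1,f_2\in F$ with $f_1\neq f_2$, \[\widehat{f_1}(\mathbf{h})+\widehat{f_2}(\mathbf{h})-\widehat{f_1+f_2}(\mathbf{0})\neq 2^m\quad\text{and}\quad \widehat{f_1}(\mathbf{h})+\widehat{f_2}(\mathbf{0})-\widehat{f_1+f_2}(\mathbf{h})\neq 2^m.\]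
   Context: A partial spread in $\mathbb{F}_2^m$ ($m=2t$) is a set of subspaces $E_1,\dots,E_\alpha$ of $\mathbb{F}_2^m$, each of dimension $t$, with $E_i\cap E_j=\{\mathbf{0}\}$ for $i\ne j$. $f_i:\mathbb{F}_2^m\to\mathbb{F}_2$ is the indicator function of $E_i\setminus\{\mathbf{0}\}$; sums of Boolean functions are mod 2. For a Boolean function $h$, $\widehat{h}(\mathbf{w})=\sum_{\mathbf{x}\in\mathbb{F}_2^m}(-1)^{h(\mathbf{x})+\mathbf{w}\cdot\mathbf{x}}$ with the standard inner product. *)

theory Defs
  imports "HOL-Analysis.Analysis" "HOL-Library.Z2"
begin

text \<open>Vectors of F_2^m are modelled as bit ^ 'n with CARD('n) = m; Boolean functions
  are maps bit ^ 'n \<Rightarrow> bit (so their sum is addition mod 2).\<close>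

definition dotF2 :: "bit ^ 'n \<Rightarrow> bit ^ 'n \<Rightarrow> bit" where
  "dotF2 w x = (\<Sum>i\<in>UNIV. w $ i * x $ i)"

definition walsh :: "(bit ^ 'n \<Rightarrow> bit) \<Rightarrow> bit ^ 'n \<Rightarrow> int" where
  "walsh h w = (\<Sum>x\<in>UNIV. (-1::int) ^ (if h x + dotF2 w x = 0 then 0 else 1))"

definition partial_spread :: "nat \<Rightarrow> nat \<Rightarrow> (nat \<Rightarrow> (bit ^ 'n) set) \<Rightarrow> bool" where
  "partial_spread t \<alpha> E \<longleftrightarrow>
     (\<forall>i\<in>{1..\<alpha>}. vec.subspace (E i) \<and> vec.dim (E i) = t) \<and>
     (\<forall>i\<in>{1..\<alpha>}. \<forall>j\<in>{1..\<alpha>}. i \<noteq> j \<longrightarrow> E i \<inter> E j = {0})"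

definition spread_ind :: "(bit ^ 'n) set \<Rightarrow> bit ^ 'n \<Rightarrow> bit" where
  "spread_ind S x = (if x \<in> S \<and> x \<noteq> 0 then 1 else 0)"

end

theory Submission
  imports Defs
begin

lemma bit_UNIV: "(UNIV::bit set) = {0,1}"
  by (auto intro: bit.exhaust)

lemma card_bit: "CARD(bit) = 2" by (simp add: bit_UNIV)

lemma finite_vec_bit: "finite (UNIV :: (bit ^ 'n) set)"
proof -
  have "CARD(bit ^ 'n) = 2 ^ CARD('n)" by (simp add: card_bit)
  then show ?thesis by (metis card.infinite power_not_zero zero_neq_numeral)
qed

lemma bit_add_self[simp]: "(a::bit) + a = 0"
  by (cases a) auto

lemma vec_add_self[simp]: "(x::bit^'n) + x = 0"
  by (simp add: vec_eq_iff)

definition chi :: "bit ^ 'n \<Rightarrow> bit ^ 'n \<Rightarrow> int" where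
  "chi w x = (if dotF2 w x = 0 then 1 else -1)"

lemma dot_add: "dotF2 w (x + y) = dotF2 w x + dotF2 w y"
proof -
  have "dotF2 w (x + y) = (\<Sum>i\<in>UNIV. w $ i * x $ i + w $ i * y $ i)"
    unfolding dotF2_def by (rule sum.cong[OF refl]) (simp only: vector_add_component distrib_left)
  also have "\<dots> = dotF2 w x + dotF2 w y"
    unfolding dotF2_def by (rule sum.distrib)
  finally show ?thesis .
qed

lemma chi_add: "chi w (x + y) = chi w x * chi w y"
  unfolding chi_def dot_add
  by (cases "dotF2 w x"; cases "dotF2 w y") auto

lemma sgn_bit: "(-1::int) ^ (if a + b = (0::bit) then 0 else 1) =
   (if a = 0 then 1 else -1) * (if b = 0 then 1 else -1)"
  by (cases a; cases b) auto

lemma walsh_chi: "walsh h w = (\<Sum>x\<in>UNIV. chi w x * (if h x = 0 then 1 else -1))"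
  unfolding walsh_def chi_def
  by (rule sum.cong[OF refl]) (subst sgn_bit, simp)

lemma finite_bvset[simp]: "finite (V :: (bit ^ 'n) set)"
  using finite_subset[OF subset_UNIV finite_vec_bit] .

lemma char_sum_sub:
  fixes V :: "(bit ^ 'n) set"
  assumes "0 \<in> V" "\<And>x y. x\<in>V \<Longrightarrow> y\<in>V \<Longrightarrow> x+y\<in>V"
  shows "(\<Sum>x\<in>V. chi w x) = (if \<forall>x\<in>V. dotF2 w x = 0 then int (card V) else 0)"
proof (cases "\<forall>x\<in>V. dotF2 w x = 0")
  case True
  then have "(\<Sum>x\<in>V. chi w x) = (\<Sum>x\<in>V. 1)" by (intro sum.cong) (auto simp: chi_def)
  then show ?thesis using True by simp
next
  case False
  then obtain x0 where x0: "x0 \<in> V" "dotF2 w x0 \<noteq> 0" by auto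
  have bij: "bij_betw ((+) x0) V V"
  proof (rule bij_betwI[where g="(+) x0"])
    show "(+) x0 \<in> V \<rightarrow> V" using assms(2) x0(1) by auto
    show "(+) x0 \<in> V \<rightarrow> V" using assms(2) x0(1) by auto
  qed (simp_all add: add.assoc[symmetric])
  have "(\<Sum>x\<in>V. chi w (x0 + x)) = (\<Sum>x\<in>V. chi w x)"
    by (rule sum.reindex_bij_betw[OF bij])
  moreover have "(\<Sum>x\<in>V. chi w (x0 + x)) = - (\<Sum>x\<in>V. chi w x)"
    using x0(2) by (simp add: chi_add sum_negf chi_def[of w x0])
  ultimately have "(\<Sum>x\<in>V. chi w x) = 0" by simp
  then show ?thesis using False by (simp only: if_False)
qed

lemma card_span_bit:
  fixes B :: "(bit ^ 'n) set"
  assumes "vec.independent B"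
  shows "card (vec.span B) = 2 ^ card B"
proof -
  have "finite B" by simp
  then show ?thesis using assms
  proof (induction B rule: finite_induct)
    case empty
    then show ?case by simp
  next
    case (insert b B)
    then have indB: "vec.independent B" and nb: "b \<notin> vec.span B"
      by (auto simp: vec.independent_insert)
    have IH: "card (vec.span B) = 2 ^ card B" using insert indB by blast
    have eq: "vec.span (insert b B) = vec.span B \<union> (+) b ` vec.span B"
    proof
      show "vec.span (insert b B) \<subseteq> vec.span B \<union> (+) b ` vec.span B"
      proof
        fix x assume "x \<in> vec.span (insert b B)"
        then obtain k where k: "x - k *s b \<in> vec.span B" by (auto simp: vec.span_insert)
        show "x \<in> vec.span B \<union> (+) b ` vec.span B"
        proof (cases k)
          case zero then show ?thesis using k by simp
        next
          case one
          then have "x - b \<in> vec.span B" using k by simp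
          moreover have "x = b + (x - b)" by simp
          ultimately show ?thesis by blast
        qed
      qed
      show "vec.span B \<union> (+) b ` vec.span B \<subseteq> vec.span (insert b B)"
        by (auto intro: vec.span_add vec.span_base vec.span_mono[THEN subsetD, of B "insert b B"])
    qed
    have disj: "vec.span B \<inter> (+) b ` vec.span B = {}"
    proof (rule ccontr)
      assume "vec.span B \<inter> (+) b ` vec.span B \<noteq> {}"
      then obtain y where y: "y \<in> vec.span B" "b + y \<in> vec.span B" by auto
      then have "(b + y) - y \<in> vec.span B" by (intro vec.span_diff)
      then show False using nb by simp
    qed
    have "card ((+) b ` vec.span B) = card (vec.span B)"
      by (rule card_image) (simp add: inj_on_def)
    then have "card (vec.span (insert b B)) = 2 * card (vec.span B)"
      unfolding eq by (subst card_Un_disjoint) (use disj in auto)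
    then show ?case using IH insert(1,2) by simp
  qed
qed

lemma card_subspace_bit:
  fixes V :: "(bit ^ 'n) set"
  assumes "vec.subspace V"
  shows "card V = 2 ^ vec.dim V"
proof -
  obtain B where B: "B \<subseteq> V" "vec.independent B" "V \<subseteq> vec.span B" "card B = vec.dim V"
    by (rule vec.basis_exists)
  have "vec.span B = V" using B assms by (intro vec.span_subspace) auto
  then show ?thesis using card_span_bit[OF B(2)] B(4) by simp
qed

definition ind :: "(nat \<Rightarrow> (bit ^ 'n) set) \<Rightarrow> nat set \<Rightarrow> bit ^ 'n \<Rightarrow> bit" where
  "ind E S x = (\<Sum>i\<in>S. spread_ind (E i) x)"

lemma ind_int:
  assumes fin: "finite S" and pw: "\<forall>i\<in>S. \<forall>j\<in>S. i \<noteq> j \<longrightarrow> E i \<inter> E j = {0}"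
  shows "(if ind E S x = 0 then 1 else -1 :: int) = 1 - 2 * (\<Sum>i\<in>S. if x \<in> E i \<and> x \<noteq> 0 then 1 else 0)"
proof (cases "\<exists>j\<in>S. x \<in> E j \<and> x \<noteq> 0")
  case True
  then obtain j where j: "j \<in> S" "x \<in> E j" "x \<noteq> 0" by auto
  have oth: "\<And>i. i \<in> S - {j} \<Longrightarrow> x \<notin> E i"
  proof
    fix i assume i: "i \<in> S - {j}" "x \<in> E i"
    then have "x \<in> E i \<inter> E j" using j by auto
    then show False using pw i(1) j by auto
  qed
  have "ind E S x = spread_ind (E j) x + (\<Sum>i\<in>S - {j}. spread_ind (E i) x)"
    unfolding ind_def using fin j(1) by (rule sum.remove)
  also have "(\<Sum>i\<in>S - {j}. spread_ind (E i) x) = 0"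
    using oth by (intro sum.neutral) (auto simp: spread_ind_def)
  finally have "ind E S x = 1" using j by (simp add: spread_ind_def)
  moreover have "(\<Sum>i\<in>S. if x \<in> E i \<and> x \<noteq> 0 then 1 else 0::int) = 1 + (\<Sum>i\<in>S - {j}. if x \<in> E i \<and> x \<noteq> 0 then 1 else 0)"
    using sum.remove[OF fin j(1), of "\<lambda>i. if x \<in> E i \<and> x \<noteq> 0 then 1 else 0::int"] j by simp
  moreover have "(\<Sum>i\<in>S - {j}. if x \<in> E i \<and> x \<noteq> 0 then 1 else 0::int) = 0"
    using oth by (intro sum.neutral) auto
  ultimately show ?thesis by simp
next
  case False
  then have "ind E S x = 0" unfolding ind_def by (intro sum.neutral) (auto simp: spread_ind_def)
  moreover have "(\<Sum>i\<in>S. if x \<in> E i \<and> x \<noteq> 0 then 1 else 0::int) = 0"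
    using False by (intro sum.neutral) auto
  ultimately show ?thesis by simp
qed

lemma walsh_ind_formula:
  assumes fin: "finite S" and pw: "\<forall>i\<in>S. \<forall>j\<in>S. i \<noteq> j \<longrightarrow> E i \<inter> E j = {0}"
    and z: "\<forall>i\<in>S. 0 \<in> E i"
  shows "walsh (ind E S) w = (\<Sum>x\<in>UNIV. chi w x) - 2 * (\<Sum>i\<in>S. (\<Sum>x\<in>E i. chi w x) - 1)"
proof -
  have "walsh (ind E S) w = (\<Sum>x\<in>UNIV. chi w x * (1 - 2 * (\<Sum>i\<in>S. if x \<in> E i \<and> x \<noteq> 0 then 1 else 0)))"
    unfolding walsh_chi by (rule sum.cong[OF refl]) (simp only: ind_int[OF fin pw])
  also have "\<dots> = (\<Sum>x\<in>UNIV. chi w x) - 2 * (\<Sum>x\<in>UNIV. \<Sum>i\<in>S. if x \<in> E i \<and> x \<noteq> 0 then chi w x else 0)"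
    by (simp add: algebra_simps sum_subtractf sum_distrib_left if_distrib cong: if_cong)
  also have "(\<Sum>x\<in>UNIV. \<Sum>i\<in>S. if x \<in> E i \<and> x \<noteq> 0 then chi w x else 0)
      = (\<Sum>i\<in>S. \<Sum>x\<in>UNIV. if x \<in> E i \<and> x \<noteq> 0 then chi w x else 0)"
    by (rule sum.swap)
  also have "\<dots> = (\<Sum>i\<in>S. (\<Sum>x\<in>E i. chi w x) - 1)"
  proof (rule sum.cong[OF refl])
    fix i assume i: "i \<in> S"
    have "(\<Sum>x\<in>UNIV. if x \<in> E i \<and> x \<noteq> 0 then chi w x else 0) = (\<Sum>x\<in>E i - {0}. chi w x)"
      by (subst sum.inter_filter[symmetric]) (auto intro: sum.cong)
    also have "\<dots> = (\<Sum>x\<in>E i. chi w x) - chi w 0"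
      using z i by (subst sum_diff1) auto
    finally show "(\<Sum>x\<in>UNIV. if x \<in> E i \<and> x \<noteq> 0 then chi w x else 0) = (\<Sum>x\<in>E i. chi w x) - 1"
      by (simp add: chi_def dotF2_def)
  qed
  finally show ?thesis .
qed

lemma walsh_ind_dvd:
  fixes E :: "nat \<Rightarrow> (bit ^ 'n) set"
  assumes fin: "finite S" and pw: "\<forall>i\<in>S. \<forall>j\<in>S. i \<noteq> j \<longrightarrow> E i \<inter> E j = {0}"
    and sub: "\<forall>i\<in>S. vec.subspace (E i) \<and> vec.dim (E i) = t"
    and tm: "t + 1 \<le> CARD('n)"
  shows "(2::int) ^ (t + 1) dvd walsh (ind E S) w - 2 * int (card S)"
proof -
  have z: "\<forall>i\<in>S. 0 \<in> E i" using sub vec.subspace_0 by blast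
  have U: "(2::int) ^ (t + 1) dvd (\<Sum>x\<in>UNIV. chi w x)"
  proof -
    have "(\<Sum>x\<in>(UNIV::(bit^'n) set). chi w x) = (if \<forall>x\<in>UNIV. dotF2 w x = 0 then int (card (UNIV::(bit^'n) set)) else 0)"
      by (rule char_sum_sub) auto
    moreover have "card (UNIV::(bit^'n) set) = 2 ^ CARD('n)" by (simp add: card_bit)
    moreover have "(2::int) ^ (t + 1) dvd 2 ^ CARD('n)" using le_imp_power_dvd[OF tm, where a="2::int"] by simp
    ultimately show ?thesis by simp
  qed
  have C: "(2::int) ^ (t + 1) dvd 2 * (\<Sum>x\<in>E i. chi w x)" if i: "i \<in> S" for i
  proof -
    have "(\<Sum>x\<in>E i. chi w x) = (if \<forall>x\<in>E i. dotF2 w x = 0 then int (card (E i)) else 0)"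
      using sub i by (intro char_sum_sub) (auto intro: vec.subspace_0 vec.subspace_add)
    moreover have "card (E i) = 2 ^ t" using card_subspace_bit[of "E i"] sub i by auto
    ultimately show ?thesis by simp
  qed
  have "walsh (ind E S) w - 2 * int (card S) = (\<Sum>x\<in>UNIV. chi w x) - (\<Sum>i\<in>S. 2 * (\<Sum>x\<in>E i. chi w x))"
    unfolding walsh_ind_formula[OF fin pw z] by (simp add: sum_subtractf sum_distrib_left algebra_simps)
  also have "(2::int) ^ (t + 1) dvd \<dots>"
    by (rule dvd_diff[OF U], rule dvd_sum, rule C)
  finally show ?thesis .
qed

lemma ind_symdiff:
  assumes "finite S1" "finite S2"
  shows "ind E S1 x + ind E S2 x = ind E ((S1 - S2) \<union> (S2 - S1)) x"
proof -
  let ?g = "\<lambda>i. spread_ind (E i) x"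
  have 1: "sum ?g S1 = sum ?g (S1 \<inter> S2) + sum ?g (S1 - S2)" using assms(1) by (rule sum.Int_Diff)
  have 2: "sum ?g S2 = sum ?g (S1 \<inter> S2) + sum ?g (S2 - S1)"
    using sum.Int_Diff[OF assms(2), of ?g S1] by (simp add: Int_commute)
  have 3: "sum ?g ((S1 - S2) \<union> (S2 - S1)) = sum ?g (S1 - S2) + sum ?g (S2 - S1)"
    using assms by (intro sum.union_disjoint) auto
  have "sum ?g (S1 \<inter> S2) + sum ?g (S1 - S2) + (sum ?g (S1 \<inter> S2) + sum ?g (S2 - S1))
      = (sum ?g (S1 \<inter> S2) + sum ?g (S1 \<inter> S2)) + (sum ?g (S1 - S2) + sum ?g (S2 - S1))"
    by (simp only: ac_simps)
  also have "\<dots> = sum ?g (S1 - S2) + sum ?g (S2 - S1)" by (simp only: bit_add_self add_0_left)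
  finally show ?thesis unfolding ind_def 1 2 3 .
qed

lemma card_symdiff:
  assumes "finite S1" "finite S2"
  shows "int (card ((S1 - S2) \<union> (S2 - S1))) = int (card S1) + int (card S2) - 2 * int (card (S1 \<inter> S2))"
proof -
  have "card ((S1 - S2) \<union> (S2 - S1)) = card (S1 - S2) + card (S2 - S1)"
    using assms by (intro card_Un_disjoint) auto
  moreover have "card (S1 - S2) = card S1 - card (S1 \<inter> S2)"
    using assms by (simp add: card_Diff_subset_Int)
  moreover have "card (S2 - S1) = card S2 - card (S1 \<inter> S2)"
    using assms by (simp add: card_Diff_subset_Int Int_commute)
  moreover have "card (S1 \<inter> S2) \<le> card S1" "card (S1 \<inter> S2) \<le> card S2"
    using assms by (auto intro: card_mono)
  ultimately show ?thesis by linarith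
qed

lemma final_arith:
  fixes W1 W2 W3 k1 k2 k3 c M P :: int
  assumes "M dvd W1 - 2*k1" "M dvd W2 - 2*k2" "M dvd W3 - 2*k3" "k3 = k1 + k2 - 2*c"
    "0 < c" "4*c < M" "M dvd P"
  shows "W1 + W2 - W3 \<noteq> P"
proof
  assume eq: "W1 + W2 - W3 = P"
  have "M dvd (W1 - 2*k1) + (W2 - 2*k2) - (W3 - 2*k3)" using assms(1-3) by auto
  also have "(W1 - 2*k1) + (W2 - 2*k2) - (W3 - 2*k3) = P - 4*c" using eq assms(4) by simp
  finally have h: "M dvd P - 4 * c" .
  have "M dvd P - (P - 4 * c)" using assms(7) h by (rule dvd_diff)
  then have "M dvd 4 * c" by simp
  then have "M \<le> 4 * c" using assms(5) by (intro zdvd_imp_le) auto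
  then show False using assms(6) by simp
qed

theorem lemma6:
  fixes m t s \<alpha> :: nat and E :: "nat \<Rightarrow> (bit ^ 'n) set" and A B :: "nat set"
    and f g :: "bit ^ 'n \<Rightarrow> bit" and F :: "(bit ^ 'n \<Rightarrow> bit) set"
  assumes "CARD('n) = m" and "even m" and "m \<ge> 6" and "t = m div 2"
    and "2 \<le> s" and "s \<le> 2 ^ (t - 1)"
    and "partial_spread t \<alpha> E"
    and "A \<subseteq> {1..\<alpha>}" and "B \<subseteq> {1..\<alpha>}"
    and "card A = s" and "card B = s" and "card (A \<inter> B) = 1"
    and "f = (\<lambda>x. \<Sum>i\<in>A. spread_ind (E i) x)"
    and "g = (\<lambda>x. \<Sum>i\<in>B. spread_ind (E i) x)"
    and "F = {f, g, (\<lambda>x. f x + g x)}"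
  shows "\<forall>h. h \<noteq> 0 \<longrightarrow> (\<forall>f1\<in>F. \<forall>f2\<in>F. f1 \<noteq> f2 \<longrightarrow>
           walsh f1 h + walsh f2 h - walsh (\<lambda>x. f1 x + f2 x) 0 \<noteq> 2 ^ m \<and>
           walsh f1 h + walsh f2 0 - walsh (\<lambda>x. f1 x + f2 x) h \<noteq> 2 ^ m)"
proof -
  note a = assms
  define D where "D = (A - B) \<union> (B - A)"
  have finA: "finite A" and finB: "finite B" using a(8,9) finite_subset by blast+
  have sub: "\<forall>i\<in>{1..\<alpha>}. vec.subspace (E i) \<and> vec.dim (E i) = t"
    and pw: "\<forall>i\<in>{1..\<alpha>}. \<forall>j\<in>{1..\<alpha>}. i \<noteq> j \<longrightarrow> E i \<inter> E j = {0}"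
    using a(7) unfolding partial_spread_def by auto
  have tm: "t + 1 \<le> CARD('n)" using a(1,3,4) by simp
  have t1: "t \<ge> 1" using a(3,4) by simp
  have DS: "D \<subseteq> {1..\<alpha>}" using a(8,9) unfolding D_def by auto
  have wd: "(2::int) ^ (t + 1) dvd walsh (ind E S) w - 2 * int (card S)"
    if S: "S \<subseteq> {1..\<alpha>}" for S w
    using S finite_subset[OF S] by (intro walsh_ind_dvd[OF _ _ _ tm]) (use sub pw in blast)+
  let ?Sets = "{A, B, D}"
  have Ssub: "S \<subseteq> {1..\<alpha>}" if "S \<in> ?Sets" for S using that a(8,9) DS by auto
  have Sfin: "finite S" if "S \<in> ?Sets" for S using Ssub[OF that] finite_subset by blast
  have cAB: "card (A - B) = s - 1" using a(10,12) finA by (simp add: card_Diff_subset_Int)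
  have cBA: "card (B - A) = s - 1" using a(11,12) finB by (simp add: card_Diff_subset_Int Int_commute)
  have AD: "A \<inter> D = A - B" and BD: "B \<inter> D = B - A" unfolding D_def by auto
  have cint: "1 \<le> card (S1 \<inter> S2) \<and> card (S1 \<inter> S2) \<le> s - 1"
    if "S1 \<in> ?Sets" "S2 \<in> ?Sets" "S1 \<noteq> S2" for S1 S2
  proof -
    have c: "card (A \<inter> B) = 1" "card (B \<inter> A) = 1" "card (A \<inter> D) = s - 1" "card (D \<inter> A) = s - 1"
      "card (B \<inter> D) = s - 1" "card (D \<inter> B) = s - 1"
      using a(12) cAB cBA AD BD by (simp_all add: Int_commute)
    have "S1 = A \<or> S1 = B \<or> S1 = D" "S2 = A \<or> S2 = B \<or> S2 = D" using that(1,2) by blast+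
    then have "card (S1 \<inter> S2) = 1 \<or> card (S1 \<inter> S2) = s - 1" using that(3) c by fastforce
    then show ?thesis using a(5) by auto
  qed
  have fS: "\<exists>S\<in>?Sets. f1 = ind E S" if "f1 \<in> F" for f1
  proof -
    have "f = ind E A" "g = ind E B" using a(13,14) by (auto simp: ind_def)
    moreover have "(\<lambda>x. f x + g x) = ind E D"
      using a(13,14) ind_symdiff[OF finA finB, of E] unfolding D_def by (auto simp: ind_def)
    ultimately show ?thesis using that a(15) by auto
  qed
  have M: "(2::int) ^ (t + 1) dvd 2 ^ m"
    using le_imp_power_dvd[of "t+1" m "2::int"] tm a(1) by simp
  have key: "walsh (ind E S1) w1 + walsh (ind E S2) w2 - walsh (ind E ((S1 - S2) \<union> (S2 - S1))) w3 \<noteq> 2 ^ m"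
    if S: "S1 \<in> ?Sets" "S2 \<in> ?Sets" "S1 \<noteq> S2" for S1 S2 w1 w2 w3
  proof (rule final_arith[OF wd wd wd card_symdiff[OF Sfin Sfin]])
    show "S1 \<subseteq> {1..\<alpha>}" "S2 \<subseteq> {1..\<alpha>}" using Ssub S by auto
    show "(S1 - S2) \<union> (S2 - S1) \<subseteq> {1..\<alpha>}" using Ssub S by blast
    show "S1 \<in> ?Sets" "S2 \<in> ?Sets" using S by auto
    show "0 < int (card (S1 \<inter> S2))" using cint[OF S] by simp
    have "4 * card (S1 \<inter> S2) \<le> 4 * (s - 1)" using cint[OF S] by simp
    also have "\<dots> < 4 * 2 ^ (t - 1)" using a(5,6) by simp
    also have "4 * 2 ^ (t - 1) = (2::nat) ^ (t + 1)"
    proof -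
      obtain u where "t = Suc u" using t1 by (cases t) auto
      then show ?thesis by simp
    qed
    finally have "int (4 * card (S1 \<inter> S2)) < int (2 ^ (t + 1))" by linarith
    then show "4 * int (card (S1 \<inter> S2)) < 2 ^ (t + 1)" by simp
    show "(2::int) ^ (t + 1) dvd 2 ^ m" by (rule M)
  qed
  show ?thesis
  proof (intro allI impI ballI)
    fix h :: "bit ^ 'n" and f1 f2 assume "f1 \<in> F" "f2 \<in> F" "f1 \<noteq> f2"
    then obtain S1 S2 where S: "S1 \<in> ?Sets" "S2 \<in> ?Sets" "f1 = ind E S1" "f2 = ind E S2"
      using fS by meson
    then have ne: "S1 \<noteq> S2" using \<open>f1 \<noteq> f2\<close> by auto
    have sum: "(\<lambda>x. ind E S1 x + ind E S2 x) = ind E ((S1 - S2) \<union> (S2 - S1))"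
      using S ind_symdiff[OF Sfin Sfin, of S1 S2 E] by auto
    show "walsh f1 h + walsh f2 h - walsh (\<lambda>x. f1 x + f2 x) 0 \<noteq> 2 ^ m \<and>
           walsh f1 h + walsh f2 0 - walsh (\<lambda>x. f1 x + f2 x) h \<noteq> 2 ^ m"
      unfolding sum S(3,4) using key[OF S(1,2) ne] by blast
  qed
qed

end
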